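(* For any point $\mathbf c\in\mathcal K_{d;\le2}\cap\mathcal U_{d;\le2}$, the orbit $O_d(\mathbb R)\cdot\mathbf c$ and $\mathcal K_{d;\le2}$ intersect transversally, i.e. at every point $q$ of their intersection $T_q(O_d(\mathbb R)\cdot\mathbf c)+T_q\mathcal K_{d;\le2}=\mathbb R^d\oplus\mathfrak{so}(d,\mathbb R)$.
   Context: Fix $d\ge2$. Consider $\mathbb R^d\oplus\mathfrak{so}(d,\mathbb R)$ with elements $(v,M)$, $v=(c_1,\dots,c_d)^\top$, $M$ real skew-symmetric with $M_{ij}=c_{ij}=-M_{ji}$ for $i<j$; $O_d(\mathbb R)$ acts by $A\cdot(v,M)=(Av,AMA^\top)$. Let $\mathcal K_{d;\le2}=\{(v,M): c_i=0\ (1\le i\le d-1),\ c_{j(i+1)}=0\ (1\le j<i\le d-1),\ c_d>0,\ c_{i(i+1)}>0\ (1\le i\le d-1)\}$. $\mathcal U_{d;\le2}$: on $V_{\mathbb C}=\mathbb C^d\oplus\mathfrak{so}(d,\mathbb C)$ (same coordinates) with $O_d(\mathbb C)=\{A:AA^\top=I\}$ acting the same way, let $L^{(1)}=\{c_1=\dots=c_{d-1}=0\}$ and for $2\le i\le d-1$, $L^{(i)}=\{(v,M)\in L^{(i-1)}: c_{k(d-i+2)}=0,\ 1\le k\le d-i\}$. Let $f_1=c_1^2+\dots+c_d^2$; for $2\le i\le d-1$ let $f_i$ be the $O_d(\mathbb C)$-invariant rational function on $V_{\mathbb C}$ with $f_i|_{L^{(i-1)}}=c_{1(d-i+2)}^2+\dots+c_{(d-i+1)(d-i+2)}^2$;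 let $f_d$ be the invariant rational function with $f_d|_{L^{(d-1)}}=c_{12}^2$ (they exist, have real coefficients, and are unique). $\mathcal U_{d;\le2}$ is the set of real $(v,M)$ in the domain of every $f_k$ with $f_k(v,M)\neq0$ for all $k$. *)

theory Defs
  imports Complex_Main "Jordan_Normal_Form.Matrix"
begin

(* Vectors/matrices are JNF
   vectors/matrices of dimension d (0-based internally); the paper's 1-based coordinates
   c_i and c_ij are provided by cv and cm below. *)
type_synonym 'a pt = "'a vec \<times> 'a mat"

definition Vd :: "nat \<Rightarrow> ('a::comm_ring_1) pt set" where
  "Vd d = {(v, M). v \<in> carrier_vec d \<and> M \<in> carrier_mat d d \<and> transpose_mat M = - M}"

definition cv :: "nat \<Rightarrow> 'a pt \<Rightarrow> 'a" where
  "cv i x = fst x $ (i - 1)"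

definition cm :: "nat \<Rightarrow> nat \<Rightarrow> 'a pt \<Rightarrow> 'a" where
  "cm i j x = snd x $$ (i - 1, j - 1)"

definition Ogrp :: "nat \<Rightarrow> ('a::comm_ring_1) mat set" where
  "Ogrp d = {A. A \<in> carrier_mat d d \<and> A * transpose_mat A = 1\<^sub>m d}"

definition act :: "('a::comm_ring_1) mat \<Rightarrow> 'a pt \<Rightarrow> 'a pt" where
  "act A x = (A *\<^sub>v fst x, A * snd x * transpose_mat A)"

definition orbit :: "nat \<Rightarrow> real pt \<Rightarrow> real pt set" where
  "orbit d c = {act A c | A. A \<in> Ogrp d}"

definition Kd :: "nat \<Rightarrow> real pt set" where
  "Kd d = {x \<in> Vd d.
      (\<forall>i. 1 \<le> i \<and> i \<le> d - 1 \<longrightarrow> cv i x = 0) \<and>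
      (\<forall>i j. 1 \<le> j \<and> j < i \<and> i \<le> d - 1 \<longrightarrow> cm j (i + 1) x = 0) \<and>
      cv d x > 0 \<and>
      (\<forall>i. 1 \<le> i \<and> i \<le> d - 1 \<longrightarrow> cm i (i + 1) x > 0)}"

(* the linear subspace of which K_{d;<=2} is an open subset: its tangent space at every point *)
definition TK :: "nat \<Rightarrow> real pt set" where
  "TK d = {x \<in> Vd d.
      (\<forall>i. 1 \<le> i \<and> i \<le> d - 1 \<longrightarrow> cv i x = 0) \<and>
      (\<forall>i j. 1 \<le> j \<and> j < i \<and> i \<le> d - 1 \<longrightarrow> cm j (i + 1) x = 0)}"

(* tangent space at q of the orbit O_d(R).q: image of so(d,R) under the differential of
   A |-> A.q at the identity, X |-> (Xv, XM + MX^T) = (Xv, XM - MX) *)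
definition Torb :: "nat \<Rightarrow> real pt \<Rightarrow> real pt set" where
  "Torb d q = {(X *\<^sub>v fst q, X * snd q + snd q * transpose_mat X) | X.
                 X \<in> carrier_mat d d \<and> transpose_mat X = - X}"

definition ptsum :: "('a::comm_ring_1) pt set \<Rightarrow> 'a pt set \<Rightarrow> 'a pt set" where
  "ptsum S T = {(fst a + fst b, snd a + snd b) | a b. a \<in> S \<and> b \<in> T}"

inductive_set polyfun :: "nat \<Rightarrow> (complex pt \<Rightarrow> complex) set" for d where
  pconst: "(\<lambda>x. c) \<in> polyfun d"
| pcv: "1 \<le> i \<Longrightarrow> i \<le> d \<Longrightarrow> cv i \<in> polyfun d"
| pcm: "1 \<le> i \<Longrightarrow> i < j \<Longrightarrow> j \<le> d \<Longrightarrow> cm i j \<in> polyfun d"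
| padd: "p \<in> polyfun d \<Longrightarrow> q \<in> polyfun d \<Longrightarrow> (\<lambda>x. p x + q x) \<in> polyfun d"
| pmul: "p \<in> polyfun d \<Longrightarrow> q \<in> polyfun d \<Longrightarrow> (\<lambda>x. p x * q x) \<in> polyfun d"

definition ratrep :: "nat \<Rightarrow> (complex pt \<Rightarrow> complex) \<Rightarrow> (complex pt \<Rightarrow> complex) \<Rightarrow> bool" where
  "ratrep d p q \<longleftrightarrow> p \<in> polyfun d \<and> q \<in> polyfun d \<and> (\<exists>x \<in> Vd d. q x \<noteq> 0)"

definition rateq :: "nat \<Rightarrow> (complex pt \<Rightarrow> complex) \<Rightarrow> (complex pt \<Rightarrow> complex)
                    \<Rightarrow> (complex pt \<Rightarrow> complex) \<Rightarrow> (complex pt \<Rightarrow> complex) \<Rightarrow> bool" where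
  "rateq d p1 q1 p2 q2 \<longleftrightarrow> (\<forall>x \<in> Vd d. p1 x * q2 x = p2 x * q1 x)"

definition invariant :: "nat \<Rightarrow> (complex pt \<Rightarrow> complex) \<Rightarrow> (complex pt \<Rightarrow> complex) \<Rightarrow> bool" where
  "invariant d p q \<longleftrightarrow> (\<forall>A \<in> Ogrp d. rateq d (\<lambda>x. p (act A x)) (\<lambda>x. q (act A x)) p q)"

definition restricts_to :: "nat \<Rightarrow> (complex pt \<Rightarrow> complex) \<Rightarrow> (complex pt \<Rightarrow> complex)
                           \<Rightarrow> complex pt set \<Rightarrow> (complex pt \<Rightarrow> complex) \<Rightarrow> bool" where
  "restricts_to d p q L g \<longleftrightarrow>
     (\<exists>p' q'. ratrep d p' q' \<and> rateq d p q p' q' \<and> (\<exists>x \<in> L. q' x \<noteq> 0) \<and>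
              (\<forall>x \<in> L. p' x = g x * q' x))"

definition dom_nonzero :: "nat \<Rightarrow> (complex pt \<Rightarrow> complex) \<Rightarrow> (complex pt \<Rightarrow> complex)
                           \<Rightarrow> complex pt \<Rightarrow> bool" where
  "dom_nonzero d p q z \<longleftrightarrow>
     (\<exists>p' q'. ratrep d p' q' \<and> rateq d p q p' q' \<and> q' z \<noteq> 0 \<and> p' z / q' z \<noteq> 0)"

(* L^{(i)}, 1 <= i <= d-1 (L 0 = V_C is only an auxiliary value) *)
primrec Lset :: "nat \<Rightarrow> nat \<Rightarrow> complex pt set" where
  "Lset d 0 = Vd d"
| "Lset d (Suc n) =
     (if n = 0 then {x \<in> Vd d. \<forall>i. 1 \<le> i \<and> i \<le> d - 1 \<longrightarrow> cv i x = 0}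
      else {x \<in> Lset d n. \<forall>k. 1 \<le> k \<and> k \<le> d - Suc n \<longrightarrow> cm k (d - Suc n + 2) x = 0})"

definition is_f :: "nat \<Rightarrow> nat \<Rightarrow> (complex pt \<Rightarrow> complex) \<Rightarrow> (complex pt \<Rightarrow> complex) \<Rightarrow> bool" where
  "is_f d k p q \<longleftrightarrow> ratrep d p q \<and>
     (if k = 1 then rateq d p q (\<lambda>x. \<Sum>i = 1..d. (cv i x)\<^sup>2) (\<lambda>x. 1)
      else if k < d then invariant d p q \<and>
        restricts_to d p q (Lset d (k - 1)) (\<lambda>x. \<Sum>m = 1..d - k + 1. (cm m (d - k + 2) x)\<^sup>2)
      else invariant d p q \<and> restricts_to d p q (Lset d (d - 1)) (\<lambda>x. (cm 1 2 x)\<^sup>2))"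

definition complexify :: "real pt \<Rightarrow> complex pt" where
  "complexify x = (map_vec complex_of_real (fst x), map_mat complex_of_real (snd x))"

definition Ud :: "nat \<Rightarrow> real pt set" where
  "Ud d = {x \<in> Vd d. \<forall>k. 1 \<le> k \<and> k \<le> d \<longrightarrow>
             (\<exists>p q. is_f d k p q \<and> dom_nonzero d p q (complexify x))}"

end

theory Submission
  imports Defs
begin

lemma skew_entry:
  assumes "M \<in> carrier_mat d d" "transpose_mat M = - M" "i < d" "j < d"
  shows "M $$ (i,j) = - M $$ (j,i)"
proof -
  have "M $$ (i,j) = transpose_mat M $$ (j,i)" using assms(1,3,4) by simp
  also have "\<dots> = (- M) $$ (j,i)" using assms(2) by simp
  also have "\<dots> = - M $$ (j,i)" using assms by simp
  finally show ?thesis .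
qed

lemma skew_comm:
  fixes X M :: "real mat"
  assumes X: "X \<in> carrier_mat d d" "transpose_mat X = - X"
    and M: "M \<in> carrier_mat d d" "transpose_mat M = - M"
  shows "transpose_mat (X * M + M * transpose_mat X) = - (X * M + M * transpose_mat X)"
proof (rule eq_matI)
  fix i j assume ij: "i < dim_row (- (X * M + M * transpose_mat X))" "j < dim_col (- (X * M + M * transpose_mat X))"
  hence i: "i < d" and j: "j < d" using X M by auto
  have e1: "\<And>l. l < d \<Longrightarrow> X $$ (i,l) * M $$ (l,j) = - (M $$ (j,l) * X $$ (i,l))"
  proof -
    fix l assume l: "l < d"
    have "M $$ (l,j) = - M $$ (j,l)" by (rule skew_entry[OF M l j])
    thus "X $$ (i,l) * M $$ (l,j) = - (M $$ (j,l) * X $$ (i,l))" by simp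
  qed
  have e2: "\<And>l. l < d \<Longrightarrow> M $$ (i,l) * X $$ (j,l) = - (X $$ (j,l) * M $$ (l,i))"
  proof -
    fix l assume l: "l < d"
    have "M $$ (i,l) = - M $$ (l,i)" by (rule skew_entry[OF M i l])
    thus "M $$ (i,l) * X $$ (j,l) = - (X $$ (j,l) * M $$ (l,i))" by simp
  qed
  have "transpose_mat (X * M + M * transpose_mat X) $$ (i,j) = (X * M + M * transpose_mat X) $$ (j,i)"
    using i j X M by simp
  also have "\<dots> = (\<Sum>l<d. X $$ (j,l) * M $$ (l,i)) + (\<Sum>l<d. M $$ (j,l) * X $$ (i,l))"
    using i j X(1) M(1) by (simp add: scalar_prod_def lessThan_atLeast0)
  also have "\<dots> = - ((\<Sum>l<d. X $$ (i,l) * M $$ (l,j)) + (\<Sum>l<d. M $$ (i,l) * X $$ (j,l)))"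
    using e1 e2 by (simp add: sum_negf[symmetric])
  also have "\<dots> = (- (X * M + M * transpose_mat X)) $$ (i,j)"
    using i j X(1) M(1) by (simp add: scalar_prod_def lessThan_atLeast0)
  finally show "transpose_mat (X * M + M * transpose_mat X) $$ (i,j) = (- (X * M + M * transpose_mat X)) $$ (i,j)" .
qed (use X M in auto)

lemma mult_entry:
  fixes A B :: "real mat"
  assumes "A \<in> carrier_mat d d" "B \<in> carrier_mat d d" "a < d" "b < d"
  shows "(A * B) $$ (a,b) = (\<Sum>l<d. A $$ (a,l) * B $$ (l,b))"
  using assms by (simp add: scalar_prod_def lessThan_atLeast0)

lemma multv_entry:
  fixes A :: "real mat"
  assumes "A \<in> carrier_mat d d" "v \<in> carrier_vec d" "a < d"
  shows "(A *\<^sub>v v) $ a = (\<Sum>l<d. A $$ (a,l) * v $ l)"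
  using assms by (simp add: scalar_prod_def lessThan_atLeast0)

lemma sum_two:
  fixes f :: "nat \<Rightarrow> real"
  assumes "finite S" "p \<in> S" "p \<noteq> q" "\<And>l. l \<in> S \<Longrightarrow> l \<noteq> p \<Longrightarrow> l \<noteq> q \<Longrightarrow> f l = 0"
  shows "sum f S = f p + (if q \<in> S then f q else 0)"
proof -
  have "sum f S = (\<Sum>l\<in>S. (if l = p then f p else 0) + (if l = q then f q else 0))"
    using assms by (intro sum.cong) auto
  also have "\<dots> = f p + (if q \<in> S then f q else 0)"
    using assms by (simp add: sum.distrib sum.delta)
  finally show ?thesis .
qed

function xs :: "nat \<Rightarrow> real mat \<Rightarrow> real mat \<Rightarrow> real vec \<Rightarrow> real \<Rightarrow> nat \<Rightarrow> nat \<Rightarrow> real" where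
 "xs d M N w cc a c = (if d - 1 \<le> c then (if c = d - 1 then w $ a / cc else 0)
   else (N $$ (a, c+1) - xs d M N w cc a (c+2) * M $$ (c+2, c+1) + M $$ (a, a+1) * xs d M N w cc (a+1) (c+1)
         + (if a = 0 then 0 else M $$ (a, a-1) * xs d M N w cc (a-1) (c+1))) / M $$ (c, c+1))"
  by pat_completeness auto
termination by (relation "measure (\<lambda>(d,M,N,w,cc,a,c). d - c)") auto

declare xs.simps[simp del]

lemma main:
  fixes v w :: "real vec" and M N :: "real mat"
  assumes d: "d \<ge> 2" and v: "v \<in> carrier_vec d" and M: "M \<in> carrier_mat d d" "transpose_mat M = - M"
    and hv: "\<And>i. i < d - 1 \<Longrightarrow> v $ i = 0" and cpos: "v $ (d-1) > 0"
    and hz: "\<And>a b. a + 1 < b \<Longrightarrow> b \<le> d - 1 \<Longrightarrow> M $$ (a,b) = 0"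
    and hp: "\<And>i. i < d - 1 \<Longrightarrow> M $$ (i,i+1) > 0"
    and wN: "(w,N) \<in> Vd d"
  shows "(w,N) \<in> ptsum (Torb d (v,M)) (TK d)"
proof -
  from wN have w: "w \<in> carrier_vec d" and N: "N \<in> carrier_mat d d" "transpose_mat N = - N"
    by (auto simp: Vd_def)
  have sparse: "M $$ (l,b) = 0" if "l < d" "b < d" "l + 1 \<noteq> b" "b + 1 \<noteq> l" for l b
  proof (cases "l < b")
    case True thus ?thesis using that hz by auto
  next
    case False
    show ?thesis
    proof (cases "l = b")
      case True
      have "M $$ (l,b) = - M $$ (b,l)" by (rule skew_entry[OF M that(1,2)])
      thus ?thesis using True by simp
    next
      case False
      hence "M $$ (b,l) = 0" using hz \<open>\<not> l < b\<close> that by auto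
      moreover have "M $$ (l,b) = - M $$ (b,l)" by (rule skew_entry[OF M that(1,2)])
      ultimately show ?thesis by simp
    qed
  qed
  define cc where "cc = v $ (d-1)"
  define x where "x = xs d M N w cc"
  define X where "X = mat d d (\<lambda>(i,j). if i < j then x i j else if j < i then - x j i else 0)"
  have X: "X \<in> carrier_mat d d" "transpose_mat X = - X"
    unfolding X_def by (auto intro!: eq_matI)
  define A where "A = X * M + M * transpose_mat X"
  have A: "A \<in> carrier_mat d d" "transpose_mat A = - A"
    using X M skew_comm[OF X M] unfolding A_def by auto
  have Xv: "(X *\<^sub>v v) $ k = w $ k" if k: "k < d - 1" for k
  proof -
    have "(X *\<^sub>v v) $ k = (\<Sum>l<d. X $$ (k,l) * v $ l)" using multv_entry[OF X(1) v] k by simp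
    also have "\<dots> = (\<Sum>l<d. if l = d - 1 then X $$ (k,d-1) * v $ (d-1) else 0)"
      by (rule sum.cong) (use hv in auto)
    also have "\<dots> = X $$ (k,d-1) * v $ (d-1)" using d by simp
    also have "\<dots> = x k (d-1) * cc" using k unfolding X_def cc_def by simp
    also have "\<dots> = w $ k" unfolding x_def using cpos cc_def by (simp add: xs.simps)
    finally show ?thesis .
  qed
  have Aab: "A $$ (a,b) = N $$ (a,b)" if ab: "a + 1 < b" "b \<le> d - 1" for a b
  proof -
    have a: "a < d" and b: "b < d" using ab d by auto
    have XM1: "(X * M) $$ (a,b) = X $$ (a,b-1) * M $$ (b-1,b) + (if b+1 \<in> {..<d} then X $$ (a,b+1) * M $$ (b+1,b) else 0)"
      unfolding mult_entry[OF X(1) M(1) a b]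
      by (rule sum_two) (use ab b sparse in auto)
    have xad: "x a d = 0" unfolding x_def using d by (simp add: xs.simps)
    have XM: "(X * M) $$ (a,b) = x a (b-1) * M $$ (b-1,b) + x a (b+1) * M $$ (b+1,b)"
    proof (cases "b + 1 < d")
      case True
      have "a < b - 1" using ab by auto
      thus ?thesis using XM1 ab True unfolding X_def by simp
    next
      case False
      hence "b + 1 = d" using b by simp
      moreover have "a < b - 1" using ab by auto
      ultimately show ?thesis using XM1 ab xad b unfolding X_def by simp
    qed
    have MX1: "(M * (- X)) $$ (a,b) = M $$ (a,a+1) * (- X) $$ (a+1,b) + (if a-1 \<in> {..<d} then M $$ (a,a-1) * (- X) $$ (a-1,b) else 0)"
    proof -
      have mX: "- X \<in> carrier_mat d d" using X(1) by simp
      show ?thesis unfolding mult_entry[OF M(1) mX a b]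
        by (rule sum_two) (use ab a b sparse in auto)
    qed
    have m00: "M $$ (0,0) = 0" using sparse[of 0 0] d by simp
    have MX: "(M * (- X)) $$ (a,b) = - M $$ (a,a+1) * x (a+1) b - (if a = 0 then 0 else M $$ (a,a-1) * x (a-1) b)"
      using MX1 ab a b m00 X(1) unfolding X_def by auto
    have AXM: "A = X * M + M * (- X)" unfolding A_def using X by simp
    have "A $$ (a,b) = (X * M) $$ (a,b) + (M * (- X)) $$ (a,b)"
      unfolding AXM using X M a b by simp
    also have "\<dots> = N $$ (a,b)"
    proof -
      have c: "\<not> d - 1 \<le> b - 1" using ab by auto
      have b1: "b - 1 + 1 = b" "b - 1 + 2 = b + 1" using ab by auto
      have pos: "M $$ (b-1, b) > 0" using hp[of "b-1"] ab b1 by auto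
      have "x a (b-1) = (N $$ (a, b) - x a (b+1) * M $$ (b+1, b) + M $$ (a, a+1) * x (a+1) b
         + (if a = 0 then 0 else M $$ (a, a-1) * x (a-1) b)) / M $$ (b-1, b)"
        unfolding x_def by (subst xs.simps) (use c b1 in simp)
      hence "x a (b-1) * M $$ (b-1, b) = N $$ (a, b) - x a (b+1) * M $$ (b+1, b) + M $$ (a, a+1) * x (a+1) b
         + (if a = 0 then 0 else M $$ (a, a-1) * x (a-1) b)" using pos by simp
      thus ?thesis unfolding XM MX by simp
    qed
    finally show ?thesis .
  qed
  have Xvc: "X *\<^sub>v v \<in> carrier_vec d" using X v by simp
  have T1: "(X *\<^sub>v v, A) \<in> Torb d (v,M)" unfolding Torb_def A_def using X by auto
  have wv: "w - X *\<^sub>v v \<in> carrier_vec d" using w Xvc by simp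
  have NA: "N - A \<in> carrier_mat d d" using N(1) A(1) by auto
  have NAs: "transpose_mat (N - A) = - (N - A)"
  proof (rule eq_matI)
    fix i j assume "i < dim_row (- (N - A))" "j < dim_col (- (N - A))"
    hence i: "i < d" and j: "j < d" using N A by auto
    show "transpose_mat (N - A) $$ (i,j) = (- (N - A)) $$ (i,j)"
      using i j N A skew_entry[OF N, of i j] skew_entry[OF A, of i j] by simp
  qed (use N A in auto)
  have T2: "(w - X *\<^sub>v v, N - A) \<in> TK d"
    unfolding TK_def Vd_def
  proof (intro CollectI conjI allI impI)
    fix i assume i: "1 \<le> i \<and> i \<le> d - 1"
    hence i1: "i - 1 < d - 1" "i - 1 < d" by auto
    have "(w - X *\<^sub>v v) $ (i-1) = w $ (i-1) - (X *\<^sub>v v) $ (i-1)"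
      using i1 X(1) by simp
    thus "cv i (w - X *\<^sub>v v, N - A) = 0" unfolding cv_def using Xv[OF i1(1)] by simp
  next
    fix i j assume ij: "1 \<le> j \<and> j < i \<and> i \<le> d - 1"
    hence "A $$ (j-1, i) = N $$ (j-1, i)" using Aab[of "j-1" i] by auto
    thus "cm j (i + 1) (w - X *\<^sub>v v, N - A) = 0" unfolding cm_def using ij N A d by auto
  qed (use wv NA NAs in auto)
  have eq: "(w, N) = (fst (X *\<^sub>v v, A) + fst (w - X *\<^sub>v v, N - A), snd (X *\<^sub>v v, A) + snd (w - X *\<^sub>v v, N - A))"
  proof -
    have "w = X *\<^sub>v v + (w - X *\<^sub>v v)" by (rule eq_vecI) (use w X(1) in auto)
    moreover have "N = A + (N - A)" by (rule eq_matI) (use N(1) A(1) in auto)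
    ultimately show ?thesis by simp
  qed
  show ?thesis unfolding ptsum_def using T1 T2 eq by blast
qed

lemma sub:
  fixes q :: "real pt"
  assumes "q \<in> Vd d"
  shows "ptsum (Torb d q) (TK d) \<subseteq> Vd d"
proof
  fix z assume "z \<in> ptsum (Torb d q) (TK d)"
  then obtain X t T where X: "X \<in> carrier_mat d d" "transpose_mat X = - X"
    and tT: "(t,T) \<in> Vd d"
    and z: "z = (X *\<^sub>v fst q + t, X * snd q + snd q * transpose_mat X + T)"
    unfolding ptsum_def Torb_def TK_def by auto
  obtain v M where q: "q = (v,M)" by fastforce
  from assms q have v: "v \<in> carrier_vec d" and M: "M \<in> carrier_mat d d" "transpose_mat M = - M"
    by (auto simp: Vd_def)
  from tT have t: "t \<in> carrier_vec d" and T: "T \<in> carrier_mat d d" "transpose_mat T = - T"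
    by (auto simp: Vd_def)
  define A where "A = X * M + M * transpose_mat X"
  have A: "A \<in> carrier_mat d d" "transpose_mat A = - A"
    using X M skew_comm[OF X M] unfolding A_def by auto
  have s: "transpose_mat (A + T) = - (A + T)"
  proof (rule eq_matI)
    fix i j assume "i < dim_row (- (A + T))" "j < dim_col (- (A + T))"
    hence i: "i < d" and j: "j < d" using T A by auto
    show "transpose_mat (A + T) $$ (i,j) = (- (A + T)) $$ (i,j)"
      using i j T A skew_entry[OF T, of i j] skew_entry[OF A, of i j] by simp
  qed (use T A in auto)
  show "z \<in> Vd d" unfolding z q Vd_def using s A T X v t unfolding A_def by auto
qed

theorem lemma4p2:
  fixes d :: nat and c :: "real pt"
  assumes "d \<ge> 2" and "c \<in> Kd d \<inter> Ud d"
  shows "\<forall>q \<in> orbit d c \<inter> Kd d. ptsum (Torb d q) (TK d) = Vd d"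
proof
  fix q assume "q \<in> orbit d c \<inter> Kd d"
  hence qK: "q \<in> Kd d" by simp
  obtain v M where q: "q = (v,M)" by fastforce
  have qV: "q \<in> Vd d" using qK by (simp add: Kd_def)
  from qV q have v: "v \<in> carrier_vec d" and M: "M \<in> carrier_mat d d" "transpose_mat M = - M"
    by (auto simp: Vd_def)
  have hv: "v $ i = 0" if "i < d - 1" for i
    using qK that unfolding Kd_def q cv_def
    by (auto dest!: spec[of _ "i+1"])
  have cpos: "v $ (d-1) > 0" using qK unfolding Kd_def q cv_def by auto
  have hz: "M $$ (a,b) = 0" if "a + 1 < b" "b \<le> d - 1" for a b
  proof -
    have "\<forall>i j. 1 \<le> j \<and> j < i \<and> i \<le> d - 1 \<longrightarrow> cm j (i + 1) q = 0"
      using qK unfolding Kd_def by blast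
    hence "cm (a+1) (b + 1) q = 0" using that by auto
    thus ?thesis unfolding cm_def q by simp
  qed
  have hp: "M $$ (i,i+1) > 0" if "i < d - 1" for i
    using qK that unfolding Kd_def q cm_def
    by (auto dest!: spec[of _ "i+1"])
  show "ptsum (Torb d q) (TK d) = Vd d"
  proof
    show "ptsum (Torb d q) (TK d) \<subseteq> Vd d" by (rule sub[OF qV])
  next
    show "Vd d \<subseteq> ptsum (Torb d q) (TK d)"
    proof
      fix z :: "real pt" assume "z \<in> Vd d"
      moreover obtain w N where "z = (w,N)" by fastforce
      ultimately show "z \<in> ptsum (Torb d q) (TK d)"
        unfolding q using main[OF assms(1) v M hv cpos hz hp] by simp
    qed
  qed
qed
end
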